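(* Let $A=\mathbb C[t]/(t^2)$ and $\lambda\in P^+$, and let $(\lambda_1^{\max},\lambda_2^{\max})$ be as defined below. Then $W_A(0,\lambda)\cong F_{\lambda_1^{\max},\lambda_2^{\max}}$ as $\mathfrak{sl}_n\otimes A$-modules (and hence as $\mathfrak{sl}_n\otimes\mathbb C[t]$-modules).
   Context: $\mathfrak{sl}_n=\mathfrak n^+\oplus\mathfrak h\oplus\mathfrak n^-$, $I=\{1,\dots,n-1\}$, $R^+$ positive roots, $\omega_1,\dots,\omega_{n-1}$ fundamental weights, $P^+$ dominant integral weights; for $\alpha\in R^+$ fix an $\mathfrak{sl}_2$-triple $e_\alpha,f_\alpha,h_\alpha$ with $f_\alpha\in\mathfrak g_{-\alpha}$. For a commutative algebra $A$, $\mathfrak{sl}_n\otimes A$ has bracket $[x\otimes p,y\otimes q]=[x,y]\otimes pq$. For $A=\mathbb C[t]/(t^2)$, the graded local Weyl module $W_A(0,\lambda)$ is the $\mathfrak{sl}_n\otimes A$-module generated by $w$ subject to $(\mathfrak n^+\otimes A).w=0$, $(\mathfrak h\otimes t).w=0$, $(h\otimes1).w=\lambda(h)w$ for $h\in\mathfrak h$, and $(f_\alpha\otimes1)^{\lambda(h_\alpha)+1}.w=0$ for $\alpha\in R^+$. For $\lambda_1,\lambda_2\in P^+$, $\nu=\lambda_1+\lambda_2$, $F_{\lambda_1,\lambda_2}$ is the $\mathfrak{sl}_n\otimes\mathbb C[t]$-module generated by $\mathbb 1$ subject to $(\mathfrak n^+\otimes\mathbb C[t]).\mathbb 1=0$,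 $(\mathfrak h\otimes t\mathbb C[t]).\mathbb 1=0$, $(\mathfrak n^-\otimes t^2\mathbb C[t]).\mathbb 1=0$, $(h\otimes1).\mathbb 1=\nu(h)\mathbb 1$, and for $\alpha\in R^+$: $(f_\alpha\otimes1)^{\nu(h_\alpha)+1}.\mathbb 1=0$, $(f_\alpha\otimes t)^{\min\{\lambda_1(h_\alpha),\lambda_2(h_\alpha)\}+1}.\mathbb 1=0$; it is annihilated by $\mathfrak{sl}_n\otimes t^2\mathbb C[t]$, hence an $\mathfrak{sl}_n\otimes A$-module. Write $\lambda=\sum_{i\in I}m_i\omega_i$ and let $i_1<\dots<i_k$ be the indices $i$ with $m_i$ odd, $I_{odd}=\{i_1,\dots,i_k\}$. Define $\lambda_1^{\max}=\sum_{s=1}^k\frac{m_{i_s}+(-1)^s}{2}\,\omega_{i_s}+\sum_{i\in I\setminus I_{odd}}\frac{m_i}{2}\,\omega_i$ and $\lambda_2^{\max}=\lambda-\lambda_1^{\max}$. *)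

theory Defs
  imports Complex_Main "HOL-Computational_Algebra.Polynomial"
begin

text \<open>Elements of sl_n (x) C[t] are trace-zero n x n matrices over C[t] (indices 0..n-1),
  with Lie bracket the matrix commutator; this realises [x(x)p, y(x)q] = [x,y](x)pq.\<close>

type_synonym mat = "nat \<Rightarrow> nat \<Rightarrow> complex poly"

definition in_sl :: "nat \<Rightarrow> mat \<Rightarrow> bool" where
  "in_sl n X \<longleftrightarrow> (\<forall>i j. (n \<le> i \<or> n \<le> j) \<longrightarrow> X i j = 0) \<and> (\<Sum>i<n. X i i) = 0"

definition br :: "nat \<Rightarrow> mat \<Rightarrow> mat \<Rightarrow> mat" where
  "br n X Y = (\<lambda>i j. \<Sum>k<n. X i k * Y k j - Y i k * X k j)"

definition madd :: "mat \<Rightarrow> mat \<Rightarrow> mat" where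
  "madd X Y = (\<lambda>i j. X i j + Y i j)"

definition mscale :: "complex \<Rightarrow> mat \<Rightarrow> mat" where
  "mscale c X = (\<lambda>i j. smult c (X i j))"

definition elem :: "nat \<Rightarrow> nat \<Rightarrow> complex poly \<Rightarrow> mat" where
  "elem a b p = (\<lambda>i j. if i = a \<and> j = b then p else 0)"

definition diagonal :: "mat \<Rightarrow> bool" where
  "diagonal X \<longleftrightarrow> (\<forall>i j. i \<noteq> j \<longrightarrow> X i j = 0)"

definition strict_upper :: "mat \<Rightarrow> bool" where
  "strict_upper X \<longleftrightarrow> (\<forall>i j. j \<le> i \<longrightarrow> X i j = 0)"

definition strict_lower :: "mat \<Rightarrow> bool" where
  "strict_lower X \<longleftrightarrow> (\<forall>i j. i \<le> j \<longrightarrow> X i j = 0)"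

text \<open>Tensor algebra T(g) realised as the complex span of words over g (modulo linearity
  relations, which are put into the ideal below). Vectors are functions on words.\<close>

type_synonym vec = "mat list \<Rightarrow> complex"

inductive_set cspan :: "('a \<Rightarrow> complex) set \<Rightarrow> ('a \<Rightarrow> complex) set" for S where
  zero: "(\<lambda>_. 0) \<in> cspan S"
| base: "v \<in> S \<Longrightarrow> v \<in> cspan S"
| add: "v \<in> cspan S \<Longrightarrow> w \<in> cspan S \<Longrightarrow> (\<lambda>x. v x + w x) \<in> cspan S"
| smul: "v \<in> cspan S \<Longrightarrow> (\<lambda>x. c * v x) \<in> cspan S"

definition wd :: "mat list \<Rightarrow> vec" where
  "wd u = (\<lambda>w. if w = u then 1 else 0)"

definition words :: "nat \<Rightarrow> mat list set" where
  "words n = {u. \<forall>X\<in>set u. in_sl n X}"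

definition Tn :: "nat \<Rightarrow> vec set" where
  "Tn n = cspan (wd ` words n)"

definition lmul :: "mat list \<Rightarrow> vec \<Rightarrow> vec" where
  "lmul u v = (\<lambda>w. if take (length u) w = u then v (drop (length u) w) else 0)"

text \<open>Two-sided ideal of T(g) giving U(g): linearity of the generators and Lie relations.\<close>
definition LieRel :: "nat \<Rightarrow> vec set" where
  "LieRel n =
     {(\<lambda>w. wd (u @ [X, Y] @ v) w - wd (u @ [Y, X] @ v) w - wd (u @ [br n X Y] @ v) w) | u v X Y.
        u \<in> words n \<and> v \<in> words n \<and> in_sl n X \<and> in_sl n Y}
   \<union> {(\<lambda>w. wd (u @ [madd X Y] @ v) w - wd (u @ [X] @ v) w - wd (u @ [Y] @ v) w) | u v X Y.
        u \<in> words n \<and> v \<in> words n \<and> in_sl n X \<and> in_sl n Y}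
   \<union> {(\<lambda>w. wd (u @ [mscale c X] @ v) w - c * wd (u @ [X] @ v) w) | u v X c.
        u \<in> words n \<and> v \<in> words n \<and> in_sl n X}"

text \<open>Annihilator ideal of the cyclic generator of the module generated by one vector subject
  to the relations R (R a set of elements of U(g), written as elements of T(g)):
  the module is  Tn n / ideal n R.\<close>
definition ideal :: "nat \<Rightarrow> vec set \<Rightarrow> vec set" where
  "ideal n R = cspan (LieRel n \<union> {lmul u r | u r. u \<in> words n \<and> r \<in> R})"

text \<open>Isomorphism of the g-modules Tn n / L1 and Tn n / L2 (g acting by left multiplication).\<close>
definition mod_iso :: "nat \<Rightarrow> vec set \<Rightarrow> vec set \<Rightarrow> bool" where
  "mod_iso n L1 L2 \<longleftrightarrow> (\<exists>\<phi> :: vec \<Rightarrow> vec.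
     (\<forall>a\<in>Tn n. \<phi> a \<in> Tn n) \<and>
     (\<forall>a\<in>Tn n. \<forall>b\<in>Tn n. \<phi> (\<lambda>w. a w + b w) = (\<lambda>w. \<phi> a w + \<phi> b w)) \<and>
     (\<forall>c. \<forall>a\<in>Tn n. \<phi> (\<lambda>w. c * a w) = (\<lambda>w. c * \<phi> a w)) \<and>
     (\<forall>a\<in>Tn n. a \<in> L1 \<longleftrightarrow> \<phi> a \<in> L2) \<and>
     (\<forall>b\<in>Tn n. \<exists>a\<in>Tn n. (\<lambda>w. \<phi> a w - b w) \<in> L2) \<and>
     (\<forall>X. \<forall>a\<in>Tn n. in_sl n X \<longrightarrow> (\<lambda>w. \<phi> (lmul [X] a) w - lmul [X] (\<phi> a) w) \<in> L2))"

text \<open>Weights: lambda = sum_{i=1}^{n-1} m i * omega_i. For h = diag(d_0,..,d_{n-1}) in the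
  Cartan subalgebra, omega_i(h) = d_0 + ... + d_{i-1}.\<close>
definition wt_h :: "nat \<Rightarrow> (nat \<Rightarrow> nat) \<Rightarrow> (nat \<Rightarrow> complex) \<Rightarrow> complex" where
  "wt_h n m d = (\<Sum>i\<in>{1..<n}. of_nat (m i) * (\<Sum>k<i. d k))"

text \<open>For the positive root alpha = eps_a - eps_b (0-based, a < b < n), h_alpha = E_aa - E_bb,
  f_alpha = E_ba, and lambda(h_alpha) = m(a+1) + ... + m(b).\<close>
definition wt_root :: "(nat \<Rightarrow> nat) \<Rightarrow> nat \<Rightarrow> nat \<Rightarrow> nat" where
  "wt_root m a b = (\<Sum>l\<in>{a+1..b}. m l)"

definition one :: vec where "one = wd []"

definition h_rel :: "nat \<Rightarrow> (nat \<Rightarrow> nat) \<Rightarrow> vec set" where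
  "h_rel n m = {(\<lambda>w. wd [X] w - wt_h n m (\<lambda>i. coeff (X i i) 0) * one w) | X.
       in_sl n X \<and> diagonal X \<and> (\<forall>i. degree (X i i) = 0)}"

definition tsq :: "complex poly" where "tsq = [:0, 0, 1:]"

text \<open>Relations of the graded local Weyl module W_A(0,lambda), A = C[t]/(t^2), viewed as a
  module for sl_n (x) C[t] annihilated by sl_n (x) t^2 C[t]. Elements of sl_n (x) A are
  represented by matrices with entries of degree at most 1.\<close>
definition RelW :: "nat \<Rightarrow> (nat \<Rightarrow> nat) \<Rightarrow> vec set" where
  "RelW n m =
     {wd [X] | X. in_sl n X \<and> strict_upper X \<and> (\<forall>i j. degree (X i j) \<le> 1)}
   \<union> {wd [X] | X. in_sl n X \<and> diagonal X \<and> (\<forall>i. coeff (X i i) 0 = 0 \<and> degree (X i i) \<le> 1)}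
   \<union> h_rel n m
   \<union> {wd (replicate (wt_root m a b + 1) (elem b a 1)) | a b. a < b \<and> b < n}
   \<union> {wd [X] | X. in_sl n X \<and> (\<forall>i j. tsq dvd X i j)}"

definition RelF :: "nat \<Rightarrow> (nat \<Rightarrow> nat) \<Rightarrow> (nat \<Rightarrow> nat) \<Rightarrow> vec set" where
  "RelF n m1 m2 =
     {wd [X] | X. in_sl n X \<and> strict_upper X}
   \<union> {wd [X] | X. in_sl n X \<and> diagonal X \<and> (\<forall>i. coeff (X i i) 0 = 0)}
   \<union> {wd [X] | X. in_sl n X \<and> strict_lower X \<and> (\<forall>i j. tsq dvd X i j)}
   \<union> h_rel n (\<lambda>i. m1 i + m2 i)
   \<union> {wd (replicate (wt_root (\<lambda>i. m1 i + m2 i) a b + 1) (elem b a 1)) | a b. a < b \<and> b < n}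
   \<union> {wd (replicate (min (wt_root m1 a b) (wt_root m2 a b) + 1) (elem b a [:0, 1:])) | a b.
        a < b \<and> b < n}"

text \<open>lambda_1^max: for odd m_i, with i the s-th odd index (s = 1 + #odd indices below i),
  coefficient (m_i + (-1)^s)/2; for even m_i, coefficient m_i/2.\<close>
definition lam1max :: "(nat \<Rightarrow> nat) \<Rightarrow> nat \<Rightarrow> nat" where
  "lam1max m i =
     (if odd (m i) then
        (if even (card {j\<in>{1..<i}. odd (m j)} + 1) then (m i + 1) div 2 else (m i - 1) div 2)
      else m i div 2)"

definition lam2max :: "(nat \<Rightarrow> nat) \<Rightarrow> nat \<Rightarrow> nat" where
  "lam2max m i = m i - lam1max m i"

end

theory Submission
  imports Defs "HOL-Library.Function_Algebras"
begin


definition sc :: "complex \<Rightarrow> vec \<Rightarrow> vec" where "sc c a = (\<lambda>w. c * a w)"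

lemma cs_add: "(a::vec) \<in> cspan S \<Longrightarrow> b \<in> cspan S \<Longrightarrow> a + b \<in> cspan S"
  using cspan.add[of a S b] by (simp add: plus_fun_def)
lemma cs_sc: "(a::vec) \<in> cspan S \<Longrightarrow> sc c a \<in> cspan S"
  using cspan.smul[of a S c] by (simp add: sc_def)
lemma cs_zero: "0 \<in> cspan S"
  using cspan.zero[of S] by (simp add: zero_fun_def)
lemma cs_neg: "(a::vec) \<in> cspan S \<Longrightarrow> - a \<in> cspan S"
  using cs_sc[of a S "-1"] by (simp add: sc_def fun_Compl_def)
lemma cs_diff: "(a::vec) \<in> cspan S \<Longrightarrow> b \<in> cspan S \<Longrightarrow> a - b \<in> cspan S"
  using cs_add[OF _ cs_neg] by (metis diff_conv_add_uminus)

definition cg :: "vec set \<Rightarrow> vec \<Rightarrow> vec \<Rightarrow> bool" where "cg J a b \<longleftrightarrow> a - b \<in> J"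

lemma cg_refl: "cg (ideal n R) a a" by (simp add: cg_def ideal_def cs_zero)
lemma cg_sym: "cg (ideal n R) a b \<Longrightarrow> cg (ideal n R) b a"
  unfolding cg_def ideal_def using cs_neg by fastforce
lemma cg_trans: "cg (ideal n R) a b \<Longrightarrow> cg (ideal n R) b c \<Longrightarrow> cg (ideal n R) a c"
  unfolding cg_def ideal_def using cs_add by fastforce
lemma cg_add: "cg (ideal n R) a b \<Longrightarrow> cg (ideal n R) c d \<Longrightarrow> cg (ideal n R) (a + c) (b + d)"
  unfolding cg_def ideal_def using cs_add by (fastforce simp: algebra_simps)
lemma sc_diff: "sc c a - sc c b = sc c (a - b)" by (simp add: sc_def fun_eq_iff algebra_simps)
lemma cg_sc: "cg (ideal n R) a b \<Longrightarrow> cg (ideal n R) (sc c a) (sc c b)"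
  unfolding cg_def ideal_def using cs_sc by (fastforce simp: sc_diff)
lemma sc_sc: "sc c (sc d a) = sc (c * d) a" by (simp add: sc_def fun_eq_iff)
lemma sc_one: "sc 1 a = a" by (simp add: sc_def)
lemma sc_zero: "sc 0 a = 0" by (simp add: sc_def zero_fun_def)
lemma sc_add: "sc c a + sc d a = sc (c + d) a" by (simp add: sc_def fun_eq_iff algebra_simps)
lemma mem_cg: "a \<in> J \<longleftrightarrow> cg J a 0" by (simp add: cg_def)

lemma lmul_wd: "lmul u (wd v) = wd (u @ v)"
  unfolding lmul_def wd_def by (auto simp: fun_eq_iff) (metis append_take_drop_id)

lemma words_append[simp]: "u @ v \<in> words n \<longleftrightarrow> u \<in> words n \<and> v \<in> words n"
  by (auto simp: words_def)
lemma words_Cons[simp]: "X # v \<in> words n \<longleftrightarrow> in_sl n X \<and> v \<in> words n"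
  by (auto simp: words_def)
lemma words_Nil[simp]: "[] \<in> words n" by (simp add: words_def)
lemma words_rep[simp]: "in_sl n X \<Longrightarrow> replicate k X \<in> words n" by (simp add: words_def)

lemma lie: "u \<in> words n \<Longrightarrow> v \<in> words n \<Longrightarrow> in_sl n X \<Longrightarrow> in_sl n Y \<Longrightarrow>
  cg (ideal n R) (wd (u @ [X, Y] @ v)) (wd (u @ [Y, X] @ v) + wd (u @ [br n X Y] @ v))"
proof -
  assume a: "u \<in> words n" "v \<in> words n" "in_sl n X" "in_sl n Y"
  have "(\<lambda>w. wd (u @ [X, Y] @ v) w - wd (u @ [Y, X] @ v) w - wd (u @ [br n X Y] @ v) w) \<in> LieRel n"
    unfolding LieRel_def using a by blast
  then show ?thesis unfolding cg_def ideal_def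
    by (auto intro!: cspan.base simp: fun_eq_iff algebra_simps fun_diff_def plus_fun_def)
qed

lemma lin_add: "u \<in> words n \<Longrightarrow> v \<in> words n \<Longrightarrow> in_sl n X \<Longrightarrow> in_sl n Y \<Longrightarrow>
  cg (ideal n R) (wd (u @ [madd X Y] @ v)) (wd (u @ [X] @ v) + wd (u @ [Y] @ v))"
proof -
  assume a: "u \<in> words n" "v \<in> words n" "in_sl n X" "in_sl n Y"
  have "(\<lambda>w. wd (u @ [madd X Y] @ v) w - wd (u @ [X] @ v) w - wd (u @ [Y] @ v) w) \<in> LieRel n"
    unfolding LieRel_def using a by blast
  then show ?thesis unfolding cg_def ideal_def
    by (auto intro!: cspan.base simp: fun_eq_iff algebra_simps fun_diff_def plus_fun_def)
qed

lemma lin_sc: "u \<in> words n \<Longrightarrow> v \<in> words n \<Longrightarrow> in_sl n X \<Longrightarrow>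
  cg (ideal n R) (wd (u @ [mscale c X] @ v)) (sc c (wd (u @ [X] @ v)))"
proof -
  assume a: "u \<in> words n" "v \<in> words n" "in_sl n X"
  have "(\<lambda>w. wd (u @ [mscale c X] @ v) w - c * wd (u @ [X] @ v) w) \<in> LieRel n"
    unfolding LieRel_def using a by blast
  then show ?thesis unfolding cg_def ideal_def
    by (auto intro!: cspan.base simp: fun_eq_iff sc_def fun_diff_def)
qed

lemma rel_mem: "u \<in> words n \<Longrightarrow> r \<in> R \<Longrightarrow> lmul u r \<in> ideal n R"
  unfolding ideal_def by (rule cspan.base) blast

lemma rel_mem0: "r \<in> R \<Longrightarrow> r \<in> ideal n R"
  using rel_mem[of "[]" n r R] by (simp add: lmul_def)

lemma lmul_zero: "lmul u (\<lambda>_. 0) = (\<lambda>_. 0)" by (simp add: lmul_def fun_eq_iff)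


lemma lmul_add: "lmul u (\<lambda>w. f w + g w) = (\<lambda>w. lmul u f w + lmul u g w)"
  by (simp add: lmul_def fun_eq_iff)
lemma lmul_smul: "lmul u (\<lambda>w. c * f w) = (\<lambda>w. c * lmul u f w)"
  by (simp add: lmul_def fun_eq_iff)
lemma lmul_lw: "lmul u (\<lambda>w. f1 w - f2 w - f3 w) = (\<lambda>w. lmul u f1 w - lmul u f2 w - lmul u f3 w)"
  by (simp add: lmul_def fun_eq_iff)
lemma lmul_lw2: "lmul u (\<lambda>w. f1 w - c * f2 w) = (\<lambda>w. lmul u f1 w - c * lmul u f2 w)"
  by (simp add: lmul_def fun_eq_iff)
lemma take_split: "(take (length u + length u') w = u @ u') \<longleftrightarrow> (take (length u) w = u \<and> take (length u') (drop (length u) w) = u')"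
proof
  assume h: "take (length u + length u') w = u @ u'"
  have "take (length u) w = take (length u) (take (length u + length u') w)" by (simp add: min_def)
  also have "\<dots> = u" using h by simp
  finally have 1: "take (length u) w = u" .
  have "take (length u') (drop (length u) w) = drop (length u) (take (length u + length u') w)"
    by (simp add: drop_take)
  also have "\<dots> = u'" using h by simp
  finally show "take (length u) w = u \<and> take (length u') (drop (length u) w) = u'" using 1 by simp
next
  assume "take (length u) w = u \<and> take (length u') (drop (length u) w) = u'"
  then show "take (length u + length u') w = u @ u'" by (simp add: take_add)
qed

lemma lmul_lmul: "lmul u (lmul u' r) = lmul (u @ u') r"
  unfolding lmul_def by (auto simp: fun_eq_iff take_split drop_drop add.commute)

lemma LieRel_lmul: assumes v: "v \<in> LieRel n" and u: "u \<in> words n" shows "lmul u v \<in> LieRel n"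
proof -
  define S1 where "S1 = {(\<lambda>w. wd (u @ [X, Y] @ v) w - wd (u @ [Y, X] @ v) w - wd (u @ [br n X Y] @ v) w) | u v X Y.
        u \<in> words n \<and> v \<in> words n \<and> in_sl n X \<and> in_sl n Y}"
  define S2 where "S2 = {(\<lambda>w. wd (u @ [madd X Y] @ v) w - wd (u @ [X] @ v) w - wd (u @ [Y] @ v) w) | u v X Y.
        u \<in> words n \<and> v \<in> words n \<and> in_sl n X \<and> in_sl n Y}"
  define S3 where "S3 = {(\<lambda>w. wd (u @ [mscale c X] @ v) w - c * wd (u @ [X] @ v) w) | u v X c.
        u \<in> words n \<and> v \<in> words n \<and> in_sl n X}"
  have L: "LieRel n = S1 \<union> S2 \<union> S3" unfolding LieRel_def S1_def S2_def S3_def ..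
  from v consider "v \<in> S1" | "v \<in> S2" | "v \<in> S3" unfolding L by blast
  then show ?thesis
  proof cases
    case 1
    then obtain ua va X Y where e: "v = (\<lambda>w. wd (ua @ [X, Y] @ va) w - wd (ua @ [Y, X] @ va) w - wd (ua @ [br n X Y] @ va) w)"
      and c: "ua \<in> words n" "va \<in> words n" "in_sl n X" "in_sl n Y" unfolding S1_def by blast
    have "lmul u v = (\<lambda>w. wd ((u @ ua) @ [X, Y] @ va) w - wd ((u @ ua) @ [Y, X] @ va) w - wd ((u @ ua) @ [br n X Y] @ va) w)"
      unfolding e lmul_lw lmul_wd by simp
    moreover have "u @ ua \<in> words n" using u c by simp
    ultimately have "lmul u v \<in> S1" unfolding S1_def using c by blast
    then show ?thesis unfolding L by blast
  next
    case 2
    then obtain ua va X Y where e: "v = (\<lambda>w. wd (ua @ [madd X Y] @ va) w - wd (ua @ [X] @ va) w - wd (ua @ [Y] @ va) w)"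
      and c: "ua \<in> words n" "va \<in> words n" "in_sl n X" "in_sl n Y" unfolding S2_def by blast
    have "lmul u v = (\<lambda>w. wd ((u @ ua) @ [madd X Y] @ va) w - wd ((u @ ua) @ [X] @ va) w - wd ((u @ ua) @ [Y] @ va) w)"
      unfolding e lmul_lw lmul_wd by simp
    moreover have "u @ ua \<in> words n" using u c by simp
    ultimately have "lmul u v \<in> S2" unfolding S2_def using c by blast
    then show ?thesis unfolding L by blast
  next
    case 3
    then obtain ua va X c where e: "v = (\<lambda>w. wd (ua @ [mscale c X] @ va) w - c * wd (ua @ [X] @ va) w)"
      and cc: "ua \<in> words n" "va \<in> words n" "in_sl n X" unfolding S3_def by blast
    have "lmul u v = (\<lambda>w. wd ((u @ ua) @ [mscale c X] @ va) w - c * wd ((u @ ua) @ [X] @ va) w)"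
      unfolding e lmul_lw2 lmul_wd by simp
    moreover have "u @ ua \<in> words n" using u cc by simp
    ultimately have "lmul u v \<in> S3" unfolding S3_def using cc by blast
    then show ?thesis unfolding L by blast
  qed
qed

lemma lmul_ideal: "a \<in> ideal n R \<Longrightarrow> u \<in> words n \<Longrightarrow> lmul u a \<in> ideal n R"
  unfolding ideal_def
proof (induction a rule: cspan.induct)
  case zero then show ?case by (simp only: lmul_zero cspan.zero)
next
  case (base v)
  from base.hyps have "v \<in> LieRel n \<or> v \<in> {lmul u r | u r. u \<in> words n \<and> r \<in> R}" by (rule UnE) simp_all
  then show ?case
  proof
    assume "v \<in> LieRel n"
    from LieRel_lmul[OF this base.prems] show ?thesis by (intro cspan.base UnI1)
  next
    assume "v \<in> {lmul u r | u r. u \<in> words n \<and> r \<in> R}"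
    then obtain u' r where "v = lmul u' r" "u' \<in> words n" "r \<in> R" by blast
    then have "lmul u v = lmul (u @ u') r" "u @ u' \<in> words n" using base.prems by (simp_all add: lmul_lmul)
    then have "lmul u v \<in> {lmul u r | u r. u \<in> words n \<and> r \<in> R}" using \<open>r \<in> R\<close> by blast
    then show ?thesis by (intro cspan.base UnI2)
  qed
next
  case (add v w)
  then show ?case unfolding lmul_add by (intro cspan.add)
next
  case (smul v c)
  then show ?case unfolding lmul_smul by (intro cspan.smul)
qed

lemma ideal_mono: assumes "R \<subseteq> ideal n R'" shows "ideal n R \<subseteq> ideal n R'"
proof
  fix a assume "a \<in> ideal n R"
  then show "a \<in> ideal n R'" unfolding ideal_def[of n R]
  proof (induction a rule: cspan.induct)
    case zero then show ?case unfolding ideal_def by (rule cspan.zero)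
  next
    case (base v)
    from base.hyps have "v \<in> LieRel n \<or> v \<in> {lmul u r | u r. u \<in> words n \<and> r \<in> R}" by (rule UnE) simp_all
    then show ?case
    proof
      assume "v \<in> LieRel n"
      then show ?thesis unfolding ideal_def by (intro cspan.base UnI1)
    next
      assume "v \<in> {lmul u r | u r. u \<in> words n \<and> r \<in> R}"
      then obtain u r where "v = lmul u r" "u \<in> words n" "r \<in> R" by blast
      moreover have "r \<in> ideal n R'" using assms \<open>r \<in> R\<close> by blast
      ultimately show ?thesis using lmul_ideal by blast
    qed
  next
    case (add v w) from add.IH show ?case unfolding ideal_def by (rule cspan.add)
  next
    case (smul v c) from smul.IH show ?case unfolding ideal_def by (rule cspan.smul)
  qed
qed




definition tdv :: "mat \<Rightarrow> bool" where "tdv X \<longleftrightarrow> (\<forall>i j. tsq dvd X i j)"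
definition t1 :: "mat \<Rightarrow> bool" where "t1 X \<longleftrightarrow> (\<forall>i j. [:0,1:] dvd X i j)"

lemma br_sl: assumes "in_sl n X" "in_sl n Y" shows "in_sl n (br n X Y)"
proof -
  have z: "\<forall>i j. (n \<le> i \<or> n \<le> j) \<longrightarrow> br n X Y i j = 0"
  proof (intro allI impI)
    fix i j assume h: "n \<le> i \<or> n \<le> j"
    show "br n X Y i j = 0" unfolding br_def
    proof (rule sum.neutral, rule ballI)
      fix k assume "k \<in> {..<n}"
      then show "X i k * Y k j - Y i k * X k j = 0" using h assms unfolding in_sl_def by auto
    qed
  qed
  have "(\<Sum>i<n. \<Sum>k<n. X i k * Y k i) = (\<Sum>i<n. \<Sum>k<n. Y i k * X k i)"
    by (subst sum.swap) (simp add: mult.commute)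
  then have "(\<Sum>i<n. br n X Y i i) = 0"
    unfolding br_def by (simp add: sum_subtractf)
  with z show ?thesis by (simp add: in_sl_def)
qed

lemma tsq_eq: "tsq = [:0,1:] * [:0,1:]" by (simp add: tsq_def)

lemma br_tdv1: assumes "tdv X" shows "tdv (br n X Y)"
  unfolding tdv_def br_def
proof (intro allI dvd_sum dvd_diff)
  fix i j k
  show "tsq dvd X i k * Y k j" using assms unfolding tdv_def by (intro dvd_mult2) blast
  show "tsq dvd Y i k * X k j" using assms unfolding tdv_def by (intro dvd_mult) blast
qed
lemma br_tdv2: assumes "tdv Y" shows "tdv (br n X Y)"
  unfolding tdv_def br_def
proof (intro allI dvd_sum dvd_diff)
  fix i j k
  show "tsq dvd X i k * Y k j" using assms unfolding tdv_def by (intro dvd_mult) blast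
  show "tsq dvd Y i k * X k j" using assms unfolding tdv_def by (intro dvd_mult2) blast
qed
lemma tsq_mult: "[:0,1:] dvd a \<Longrightarrow> [:0,1:] dvd b \<Longrightarrow> tsq dvd a * b"
  unfolding tsq_eq by (rule mult_dvd_mono)
lemma br_t1: "t1 X \<Longrightarrow> t1 Y \<Longrightarrow> tdv (br n X Y)"
  unfolding tdv_def t1_def br_def by (intro allI dvd_sum dvd_diff tsq_mult) blast+

abbreviation WI where "WI n m \<equiv> ideal n (RelW n m)"

lemma mem_sum: "cg (ideal n R) a (b + c) \<Longrightarrow> b \<in> ideal n R \<Longrightarrow> c \<in> ideal n R \<Longrightarrow> a \<in> ideal n R"
proof -
  assume a: "cg (ideal n R) a (b + c)" "b \<in> ideal n R" "c \<in> ideal n R"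
  then have "cg (ideal n R) (b + c) (0 + 0)" by (intro cg_add) (simp_all add: mem_cg)
  then have "cg (ideal n R) (b + c) 0" by simp
  from cg_trans[OF a(1) this] show ?thesis by (simp add: mem_cg)
qed

lemma setb: "P x \<Longrightarrow> f x \<in> {f x | x. P x}" by blast

lemma kill: "in_sl n X \<Longrightarrow> tdv X \<Longrightarrow> u \<in> words n \<Longrightarrow> v \<in> words n \<Longrightarrow> wd (u @ [X] @ v) \<in> WI n m"
proof (induction v arbitrary: u X)
  case Nil
  have "\<forall>i j. tsq dvd X i j" using Nil.prems(2) unfolding tdv_def .
  then have "in_sl n X \<and> (\<forall>i j. tsq dvd X i j)" using Nil.prems(1) by simp
  then have "wd [X] \<in> {wd [X] | X. in_sl n X \<and> (\<forall>i j. tsq dvd X i j)}" by (rule setb[where f="\<lambda>X. wd [X]" and P="\<lambda>X. in_sl n X \<and> (\<forall>i j. tsq dvd X i j)"])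
  then have "wd [X] \<in> RelW n m" unfolding RelW_def by (rule UnI2)
  from rel_mem[OF Nil.prems(3) this] show ?case by (simp add: lmul_wd)
next
  case (Cons Z v)
  have pr: "u \<in> words n" "v \<in> words n" "in_sl n X" "in_sl n Z" "tdv X" using Cons.prems by auto
  have c: "cg (WI n m) (wd (u @ [X, Z] @ v)) (wd (u @ [Z, X] @ v) + wd (u @ [br n X Z] @ v))"
    using pr(1-4) by (rule lie)
  have "u @ [Z] \<in> words n" using pr by simp
  from Cons.IH[OF pr(3) pr(5) this pr(2)]
  have 1: "wd (u @ [Z, X] @ v) \<in> WI n m" by simp
  have 2: "wd (u @ [br n X Z] @ v) \<in> WI n m"
    by (rule Cons.IH[OF br_sl[OF pr(3) pr(4)] br_tdv1[OF pr(5)] pr(1) pr(2)])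
  have "wd (u @ [X, Z] @ v) \<in> WI n m" by (rule mem_sum[OF c 1 2])
  then show ?case by simp
qed




definition tt :: "complex poly" where "tt = [:0,1:]"
definition xt :: "nat \<Rightarrow> nat \<Rightarrow> mat" where "xt a b = elem a b tt"
definition yy :: "nat \<Rightarrow> nat \<Rightarrow> mat" where "yy a b = elem b a 1"
definition Yt :: "nat \<Rightarrow> nat \<Rightarrow> mat" where "Yt a b = elem b a tt"
definition hd2 :: "nat \<Rightarrow> nat \<Rightarrow> nat \<Rightarrow> complex poly" where
  "hd2 a b i = (if i = a then tt else if i = b then - tt else 0)"
definition Ht :: "nat \<Rightarrow> nat \<Rightarrow> mat" where "Ht a b = (\<lambda>i j. if i = j then hd2 a b i else 0)"

lemma sum_elemL: "b < n \<Longrightarrow> (\<Sum>k<n. elem a b p i k * Y k j) = (if i = a then p * Y b j else 0)"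
proof -
  assume "b < n"
  have "(\<Sum>k<n. elem a b p i k * Y k j) = (\<Sum>k<n. if k = b then (if i = a then p * Y b j else 0) else 0)"
    by (rule sum.cong) (auto simp: elem_def)
  also have "\<dots> = (if i = a then p * Y b j else 0)" using \<open>b < n\<close> by (simp add: sum.delta')
  finally show ?thesis .
qed

lemma sum_elemR: "a < n \<Longrightarrow> (\<Sum>k<n. Y i k * elem a b p k j) = (if j = b then Y i a * p else 0)"
proof -
  assume "a < n"
  have "(\<Sum>k<n. Y i k * elem a b p k j) = (\<Sum>k<n. if k = a then (if j = b then Y i a * p else 0) else 0)"
    by (rule sum.cong) (auto simp: elem_def)
  also have "\<dots> = (if j = b then Y i a * p else 0)" using \<open>a < n\<close> by (simp add: sum.delta')
  finally show ?thesis .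
qed

lemma sum_HtL: "(\<Sum>k<n. Ht a b i k * Y k j) = (if i < n then hd2 a b i * Y i j else 0)"
proof -
  have "(\<Sum>k<n. Ht a b i k * Y k j) = (\<Sum>k<n. if k = i then hd2 a b i * Y i j else 0)"
    by (rule sum.cong) (auto simp: Ht_def)
  also have "\<dots> = (if i < n then hd2 a b i * Y i j else 0)" by (simp add: sum.delta')
  finally show ?thesis .
qed

lemma sum_HtR: "(\<Sum>k<n. Y i k * Ht a b k j) = (if j < n then Y i j * hd2 a b j else 0)"
proof -
  have "(\<Sum>k<n. Y i k * Ht a b k j) = (\<Sum>k<n. if k = j then Y i j * hd2 a b j else 0)"
    by (rule sum.cong) (auto simp: Ht_def)
  also have "\<dots> = (if j < n then Y i j * hd2 a b j else 0)" by (simp add: sum.delta')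
  finally show ?thesis .
qed

lemma br_split: "br n X Y i j = (\<Sum>k<n. X i k * Y k j) - (\<Sum>k<n. Y i k * X k j)"
  by (simp add: br_def sum_subtractf)

context
  fixes n a b :: nat
  assumes ab: "a < b" "b < n"
begin

lemma an: "a < n" using ab by simp

lemma sl_elem: "i \<noteq> j \<Longrightarrow> i < n \<Longrightarrow> j < n \<Longrightarrow> in_sl n (elem i j p)"
  unfolding in_sl_def by (auto simp: elem_def intro!: sum.neutral)

lemma sl_xt: "in_sl n (xt a b)" using ab by (simp add: xt_def sl_elem)
lemma sl_yy: "in_sl n (yy a b)" using ab by (simp add: yy_def sl_elem)
lemma sl_Yt: "in_sl n (Yt a b)" using ab by (simp add: Yt_def sl_elem)
lemma sl_Ht: "in_sl n (Ht a b)"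
proof -
  have "(\<Sum>i<n. Ht a b i i) = (\<Sum>i<n. (if i = a then tt else 0) + (if i = b then - tt else 0))"
    by (rule sum.cong) (use ab in \<open>auto simp: Ht_def hd2_def\<close>)
  also have "\<dots> = 0" using ab by (simp add: sum.distrib)
  finally show ?thesis unfolding in_sl_def using ab by (auto simp: Ht_def hd2_def)
qed

lemma br_xy: "br n (xt a b) (yy a b) = Ht a b"
  apply (simp only: fun_eq_iff br_split xt_def yy_def sum_elemL[OF ab(2)] sum_elemL[OF an])
  using ab by (auto simp: Ht_def hd2_def elem_def)

lemma br_Hy: "br n (Ht a b) (yy a b) = mscale (-2) (Yt a b)"
  apply (simp only: fun_eq_iff br_split yy_def sum_HtL sum_elemL[OF an])
  using ab by (auto simp: Yt_def mscale_def hd2_def elem_def Ht_def tt_def one_pCons)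

lemma br_yY: "tdv (br n (yy a b) (Yt a b))"
proof -
  have "br n (yy a b) (Yt a b) = (\<lambda>i j. 0)"
    apply (simp only: fun_eq_iff br_split yy_def Yt_def sum_elemL[OF an])
    using ab by (auto simp: elem_def)
  then show ?thesis by (simp add: tdv_def)
qed

lemma t1_xt: "t1 (xt a b)" by (auto simp: t1_def xt_def elem_def tt_def)
lemma t1_Yt: "t1 (Yt a b)" by (auto simp: t1_def Yt_def elem_def tt_def)
lemma t1_Ht: "t1 (Ht a b)" by (auto simp: t1_def Ht_def hd2_def tt_def simp del: minus_pCons)

lemma br_xY: "tdv (br n (xt a b) (Yt a b))" by (intro br_t1 t1_xt t1_Yt)
lemma br_HY: "tdv (br n (Ht a b) (Yt a b))" by (intro br_t1 t1_Ht t1_Yt)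

end



lemma cg_dropr: "cg (ideal n R) a (b + c) \<Longrightarrow> c \<in> ideal n R \<Longrightarrow> cg (ideal n R) a b"
proof -
  assume a: "cg (ideal n R) a (b + c)" "c \<in> ideal n R"
  have "cg (ideal n R) (b + c) (b + 0)" using a(2) by (intro cg_add cg_refl) (simp add: mem_cg)
  then show ?thesis using cg_trans[OF a(1)] by simp
qed

fun cc :: "nat \<Rightarrow> nat \<Rightarrow> complex" where
  "cc 0 s = 1"
| "cc (Suc k) s = - of_nat (s * (s - 1)) * cc k (s - 2)"

lemma cc_nz: "cc k (2 * k) \<noteq> 0"
proof (induction k)
  case 0 then show ?case by simp
next
  case (Suc k)
  have e: "2 * Suc k - 2 = 2 * k" by simp
  have "(2 * Suc k) * (2 * Suc k - 1) \<noteq> 0" by simp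
  then have "(of_nat ((2 * Suc k) * (2 * Suc k - 1)) :: complex) \<noteq> 0" by (simp only: of_nat_eq_0_iff not_False_eq_True)
  moreover have "cc (Suc k) (2 * Suc k) = - of_nat ((2 * Suc k) * (2 * Suc k - 1)) * cc k (2 * k)"
    by (simp only: cc.simps e)
  ultimately show ?case using Suc.IH by (simp only: mult_eq_0_iff neg_equal_0_iff_equal) blast
qed

lemma rep_cons: "replicate j x @ x # r = x # replicate j x @ r" by (induct j) auto

lemma mem_un1: "x \<in> A \<Longrightarrow> x \<in> A \<union> B" by simp
lemma mem_un2: "x \<in> B \<Longrightarrow> x \<in> A \<union> B" by simp

context
  fixes n a b :: nat and m :: "nat \<Rightarrow> nat"
  assumes ab: "a < b" "b < n"
begin

abbreviation "J \<equiv> WI n m"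
abbreviation "x0 \<equiv> xt a b"
abbreviation "y0 \<equiv> yy a b"
abbreviation "Y0 \<equiv> Yt a b"
abbreviation "H0 \<equiv> Ht a b"

lemma slx: "in_sl n x0" using sl_xt[OF ab] .
lemma sly: "in_sl n y0" using sl_yy[OF ab] .
lemma slY: "in_sl n Y0" using sl_Yt[OF ab] .
lemma slH: "in_sl n H0" using sl_Ht[OF ab] .

lemma relx: "u \<in> words n \<Longrightarrow> wd (u @ [x0]) \<in> J"
proof -
  assume u: "u \<in> words n"
  have "in_sl n x0 \<and> strict_upper x0 \<and> (\<forall>i j. degree (x0 i j) \<le> 1)"
    using slx ab by (auto simp: strict_upper_def xt_def elem_def tt_def)
  then have "wd [x0] \<in> {wd [X] | X. in_sl n X \<and> strict_upper X \<and> (\<forall>i j. degree (X i j) \<le> 1)}"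
    by (rule setb[where f="\<lambda>X. wd [X]" and P="\<lambda>X. in_sl n X \<and> strict_upper X \<and> (\<forall>i j. degree (X i j) \<le> 1)"])
  then have "wd [x0] \<in> RelW n m" unfolding RelW_def by (intro mem_un1)
  from rel_mem[OF u this] show ?thesis by (simp add: lmul_wd)
qed

lemma relH: "u \<in> words n \<Longrightarrow> wd (u @ [H0]) \<in> J"
proof -
  assume u: "u \<in> words n"
  have "in_sl n H0 \<and> diagonal H0 \<and> (\<forall>i. coeff (H0 i i) 0 = 0 \<and> degree (H0 i i) \<le> 1)"
    using slH ab by (auto simp: diagonal_def Ht_def hd2_def tt_def)
  then have "wd [H0] \<in> {wd [X] | X. in_sl n X \<and> diagonal X \<and> (\<forall>i. coeff (X i i) 0 = 0 \<and> degree (X i i) \<le> 1)}"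
    by (rule setb[where f="\<lambda>X. wd [X]" and P="\<lambda>X. in_sl n X \<and> diagonal X \<and> (\<forall>i. coeff (X i i) 0 = 0 \<and> degree (X i i) \<le> 1)"])
  then have "wd [H0] \<in> RelW n m" unfolding RelW_def by (intro mem_un1 mem_un2)
  from rel_mem[OF u this] show ?thesis by (simp add: lmul_wd)
qed

lemma rely: "u \<in> words n \<Longrightarrow> wd (u @ replicate (wt_root m a b + 1) y0) \<in> J"
proof -
  assume u: "u \<in> words n"
  have "wd (replicate (wt_root m a b + 1) (elem b a 1)) \<in>
     {wd (replicate (wt_root m a b + 1) (elem b a 1)) | a b. a < b \<and> b < n}" using ab by blast
  then have "wd (replicate (wt_root m a b + 1) y0) \<in> RelW n m" unfolding RelW_def yy_def
    by (intro mem_un1 mem_un2)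
  from rel_mem[OF u this] show ?thesis by (simp add: lmul_wd)
qed

lemma swap: "in_sl n A \<Longrightarrow> in_sl n B \<Longrightarrow> tdv (br n A B) \<Longrightarrow> u \<in> words n \<Longrightarrow> v \<in> words n \<Longrightarrow>
   cg J (wd (u @ [A] @ replicate k B @ v)) (wd (u @ replicate k B @ [A] @ v))"
proof (induction k arbitrary: u)
  case 0 then show ?case by (simp add: cg_refl)
next
  case (Suc k)
  have w: "replicate k B @ v \<in> words n" using Suc.prems by simp
  have e1: "cg J (wd (u @ [A, B] @ (replicate k B @ v)))
     (wd (u @ [B, A] @ (replicate k B @ v)) + wd (u @ [br n A B] @ (replicate k B @ v)))"
    using Suc.prems(4) w Suc.prems(1,2) by (rule lie)
  have k: "wd (u @ [br n A B] @ (replicate k B @ v)) \<in> J"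
    using br_sl[OF Suc.prems(1,2)] Suc.prems(3,4) w by (rule kill)
  have e2: "cg J (wd (u @ [A, B] @ (replicate k B @ v))) (wd (u @ [B, A] @ (replicate k B @ v)))"
    using cg_dropr[OF e1 k] .
  have "u @ [B] \<in> words n" using Suc.prems by simp
  from Suc.IH[OF Suc.prems(1-3) this Suc.prems(5)]
  have e3: "cg J (wd (u @ [B, A] @ (replicate k B @ v))) (wd (u @ replicate (Suc k) B @ [A] @ v))" by simp
  from cg_trans[OF e2 e3] show ?case by simp
qed

lemma Qlem: "v \<in> words n \<Longrightarrow>
  cg J (wd (v @ [H0] @ replicate s y0)) (sc (- 2 * of_nat s) (wd (v @ [Y0] @ replicate (s - 1) y0)))"
proof (induction s arbitrary: v)
  case 0
  have "wd (v @ [H0]) \<in> J" using relH[OF 0] .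
  then show ?case by (simp add: mem_cg sc_def zero_fun_def)
next
  case (Suc s)
  have w: "replicate s y0 \<in> words n" using sly by simp
  have e1: "cg J (wd (v @ [H0, y0] @ replicate s y0))
     (wd (v @ [y0, H0] @ replicate s y0) + wd (v @ [br n H0 y0] @ replicate s y0))"
    using Suc.prems w slH sly by (rule lie)
  have e2: "cg J (wd (v @ [br n H0 y0] @ replicate s y0)) (sc (-2) (wd (v @ [Y0] @ replicate s y0)))"
    unfolding br_Hy[OF ab] using Suc.prems w slY by (rule lin_sc)
  have vy: "v @ [y0] \<in> words n" using Suc.prems sly by simp
  from Suc.IH[OF vy]
  have e3: "cg J (wd (v @ [y0, H0] @ replicate s y0)) (sc (- 2 * of_nat s) (wd (v @ [y0, Y0] @ replicate (s - 1) y0)))"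
    by simp
  have e4: "cg J (sc (- 2 * of_nat s) (wd (v @ [y0, Y0] @ replicate (s - 1) y0)))
                 (sc (- 2 * of_nat s) (wd (v @ [Y0] @ replicate s y0)))"
  proof (cases s)
    case 0 then show ?thesis by (simp add: cg_refl sc_zero)
  next
    case (Suc s')
    have "cg J (wd (v @ [y0] @ replicate 1 Y0 @ replicate s' y0)) (wd (v @ replicate 1 Y0 @ [y0] @ replicate s' y0))"
      using sly slY br_yY[OF ab] Suc.prems by (rule swap) (simp add: sly)
    then show ?thesis using Suc by (intro cg_sc) simp
  qed
  have "cg J (wd (v @ [H0, y0] @ replicate s y0))
     (sc (- 2 * of_nat s) (wd (v @ [Y0] @ replicate s y0)) + sc (-2) (wd (v @ [Y0] @ replicate s y0)))"
    using cg_trans[OF e1 cg_add[OF cg_trans[OF e3 e4] e2]] .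
  then have "cg J (wd (v @ [H0, y0] @ replicate s y0)) (sc (- 2 * of_nat s + - 2) (wd (v @ [Y0] @ replicate s y0)))"
    by (simp only: sc_add)
  moreover have eqc: "(- 2 * of_nat (Suc s) :: complex) = - 2 * of_nat s + - 2" by simp
  ultimately show ?case unfolding eqc by simp
qed

lemma Rlem: "v \<in> words n \<Longrightarrow>
  cg J (wd (v @ [x0] @ replicate s y0)) (sc (- of_nat (s * (s - 1))) (wd (v @ [Y0] @ replicate (s - 2) y0)))"
proof (induction s arbitrary: v)
  case 0
  have "wd (v @ [x0]) \<in> J" using relx[OF 0] .
  then show ?case by (simp add: mem_cg sc_def zero_fun_def)
next
  case (Suc s)
  have w: "replicate s y0 \<in> words n" using sly by simp
  have e1: "cg J (wd (v @ [x0, y0] @ replicate s y0))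
     (wd (v @ [y0, x0] @ replicate s y0) + wd (v @ [br n x0 y0] @ replicate s y0))"
    using Suc.prems w slx sly by (rule lie)
  have e2: "cg J (wd (v @ [br n x0 y0] @ replicate s y0)) (sc (- 2 * of_nat s) (wd (v @ [Y0] @ replicate (s - 1) y0)))"
    unfolding br_xy[OF ab] using Suc.prems by (rule Qlem)
  have vy: "v @ [y0] \<in> words n" using Suc.prems sly by simp
  from Suc.IH[OF vy]
  have e3: "cg J (wd (v @ [y0, x0] @ replicate s y0)) (sc (- of_nat (s * (s - 1))) (wd (v @ [y0, Y0] @ replicate (s - 2) y0)))"
    by simp
  have e4: "cg J (sc (- of_nat (s * (s - 1))) (wd (v @ [y0, Y0] @ replicate (s - 2) y0)))
                 (sc (- of_nat (s * (s - 1))) (wd (v @ [Y0] @ replicate (s - 1) y0)))"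
  proof (cases "s \<le> 1")
    case True then have z: "s * (s - 1) = 0" by auto
    show ?thesis unfolding z by (simp only: of_nat_0 minus_zero sc_zero cg_refl)
  next
    case False
    then have s2: "replicate (s - 1) y0 = [y0] @ replicate (s - 2) y0"
      by (cases s; cases "s - 1") auto
    have "cg J (wd (v @ [y0] @ replicate 1 Y0 @ replicate (s - 2) y0)) (wd (v @ replicate 1 Y0 @ [y0] @ replicate (s - 2) y0))"
      using sly slY br_yY[OF ab] Suc.prems by (rule swap) (simp add: sly)
    then show ?thesis unfolding s2 by (intro cg_sc) simp
  qed
  have "cg J (wd (v @ [x0, y0] @ replicate s y0))
     (sc (- of_nat (s * (s - 1))) (wd (v @ [Y0] @ replicate (s - 1) y0)) + sc (- 2 * of_nat s) (wd (v @ [Y0] @ replicate (s - 1) y0)))"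
    using cg_trans[OF e1 cg_add[OF cg_trans[OF e3 e4] e2]] .
  then have "cg J (wd (v @ [x0, y0] @ replicate s y0)) (sc (- of_nat (s * (s - 1)) + - 2 * of_nat s) (wd (v @ [Y0] @ replicate (s - 1) y0)))"
    by (simp only: sc_add)
  moreover have "s * (s - 1) + 2 * s = Suc s * (Suc s - 1)" by (cases s) auto
  then have eqc: "(- of_nat (Suc s * (Suc s - 1)) :: complex) = - of_nat (s * (s - 1)) + - 2 * of_nat s"
    by (metis (no_types, lifting) minus_add_distrib of_nat_add of_nat_mult of_nat_numeral mult_minus_left)
  moreover have "Suc s - 2 = s - 1" by simp
  ultimately show ?case unfolding eqc by simp
qed

lemma Plem: "u \<in> words n \<Longrightarrow>
  cg J (wd (u @ [x0] @ replicate j Y0 @ replicate s y0)) (sc (- of_nat (s * (s - 1))) (wd (u @ replicate (Suc j) Y0 @ replicate (s - 2) y0)))"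
proof -
  assume u: "u \<in> words n"
  have w: "replicate s y0 \<in> words n" using sly by simp
  have e1: "cg J (wd (u @ [x0] @ replicate j Y0 @ replicate s y0)) (wd (u @ replicate j Y0 @ [x0] @ replicate s y0))"
    using slx slY br_xY[OF ab] u w by (rule swap)
  have uj: "u @ replicate j Y0 \<in> words n" using u slY by simp
  from Rlem[OF uj, of s]
  have e2: "cg J (wd (u @ replicate j Y0 @ [x0] @ replicate s y0)) (sc (- of_nat (s * (s - 1))) (wd (u @ replicate (Suc j) Y0 @ replicate (s - 2) y0)))"
    by (simp add: rep_cons)
  show ?thesis using cg_trans[OF e1 e2] .
qed

lemma Tlem: "cg J (wd (replicate k x0 @ replicate j Y0 @ replicate s y0)) (sc (cc k s) (wd (replicate (j + k) Y0 @ replicate (s - 2 * k) y0)))"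
proof (induction k arbitrary: j s)
  case 0 then show ?case by (simp add: sc_one cg_refl)
next
  case (Suc k)
  have xk: "replicate k x0 \<in> words n" using slx by simp
  have e1: "cg J (wd (replicate k x0 @ [x0] @ replicate j Y0 @ replicate s y0))
     (sc (- of_nat (s * (s - 1))) (wd (replicate k x0 @ replicate (Suc j) Y0 @ replicate (s - 2) y0)))"
    using Plem[OF xk] .
  have e2: "cg J (sc (- of_nat (s * (s - 1))) (wd (replicate k x0 @ replicate (Suc j) Y0 @ replicate (s - 2) y0)))
     (sc (- of_nat (s * (s - 1))) (sc (cc k (s - 2)) (wd (replicate (Suc j + k) Y0 @ replicate (s - 2 - 2 * k) y0))))"
    using Suc.IH by (rule cg_sc)
  have "cg J (wd (replicate k x0 @ [x0] @ replicate j Y0 @ replicate s y0))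
      (sc (cc (Suc k) s) (wd (replicate (Suc j + k) Y0 @ replicate (s - 2 - 2 * k) y0)))"
    using cg_trans[OF e1 e2] by (simp add: sc_sc)
  moreover have "replicate k x0 @ [x0] = replicate (Suc k) x0" by (simp add: replicate_append_same)
  moreover have "Suc j + k = j + Suc k" "s - 2 - 2 * k = s - 2 * Suc k" by simp_all
  ultimately show ?case by (metis append_assoc)
qed

lemma mainY: assumes k: "wt_root m a b + 1 \<le> 2 * k" shows "wd (replicate k Y0) \<in> J"
proof -
  have T: "cg J (wd (replicate k x0 @ replicate (2 * k) y0)) (sc (cc k (2 * k)) (wd (replicate k Y0)))"
    using Tlem[of k 0 "2 * k"] by simp
  define N where "N = wt_root m a b + 1"
  have "replicate (2 * k) y0 = replicate ((2 * k - N) + N) y0" using k N_def by simp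
  also have "\<dots> = replicate (2 * k - N) y0 @ replicate N y0" by (rule replicate_add)
  finally have sp: "replicate (2 * k) y0 = replicate (2 * k - N) y0 @ replicate N y0" .
  have u: "replicate k x0 @ replicate (2 * k - N) y0 \<in> words n" using slx sly by simp
  have "wd ((replicate k x0 @ replicate (2 * k - N) y0) @ replicate (wt_root m a b + 1) y0) \<in> J"
    using rely[OF u] .
  then have "wd (replicate k x0 @ replicate (2 * k) y0) \<in> J" unfolding sp N_def by simp
  then have "cg J (wd (replicate k x0 @ replicate (2 * k) y0)) 0" by (simp add: mem_cg)
  from cg_trans[OF cg_sym[OF T] this]
  have "cg J (sc (cc k (2 * k)) (wd (replicate k Y0))) 0" .
  from cg_sc[OF this, of "inverse (cc k (2 * k))"]
  have "cg J (sc (inverse (cc k (2 * k)) * cc k (2 * k)) (wd (replicate k Y0))) (sc (inverse (cc k (2 * k))) 0)"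
    by (simp add: sc_sc)
  then show ?thesis using cc_nz[of k] by (simp add: sc_one mem_cg sc_def zero_fun_def)
qed

end



lemma lam1_le: "lam1max m i \<le> m i"
proof (cases "even (m i)")
  case True then obtain q where "m i = 2 * q" by (rule evenE)
  then show ?thesis unfolding lam1max_def by simp
next
  case False then obtain q where q: "m i = 2 * q + 1" by (rule oddE)
  have "(2 * q + 1 + 1) div 2 = q + 1" by simp
  moreover have "(2 * q + 1 - 1) div 2 = q" by simp
  ultimately show ?thesis unfolding lam1max_def using q by simp
qed

lemma d_val: "2 * int (lam1max m i) - int (m i) =
   (if odd (m i) then (if odd (card {j\<in>{1..<i}. odd (m j)}) then 1 else -1) else 0)"
proof (cases "even (m i)")
  case True then obtain q where "m i = 2 * q" by (rule evenE)
  then show ?thesis unfolding lam1max_def by simp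
next
  case False then obtain q where q: "m i = 2 * q + 1" by (rule oddE)
  have "(2 * q + 1 + 1) div 2 = q + 1" by simp
  moreover have "(2 * q + 1 - 1) div 2 = q" by simp
  ultimately show ?thesis unfolding lam1max_def using q by simp
qed

definition dd :: "(nat \<Rightarrow> nat) \<Rightarrow> nat \<Rightarrow> int" where
  "dd m i = int (lam1max m i) - int (lam2max m i)"

lemma dd_eq: "dd m i = 2 * int (lam1max m i) - int (m i)"
  using lam1_le[of m i] unfolding dd_def lam2max_def by (simp add: of_nat_diff)

lemma card_step: "card {j\<in>{1..Suc i}. odd (m j)} = card {j\<in>{1..i}. odd (m j)} + (if odd (m (Suc i)) then 1 else 0)"
proof -
  have "{j\<in>{1..Suc i}. odd (m j)} = (if odd (m (Suc i)) then insert (Suc i) {j\<in>{1..i}. odd (m j)} else {j\<in>{1..i}. odd (m j)})"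
    by (auto simp: le_Suc_eq)
  then show ?thesis by simp
qed

lemma G_val: "(\<Sum>j\<in>{1..i}. dd m j) = - int (card {j\<in>{1..i}. odd (m j)} mod 2)"
proof (induction i)
  case 0 then show ?case by simp
next
  case (Suc i)
  have s: "{1..Suc i} = insert (Suc i) {1..i}" by auto
  have "(\<Sum>j\<in>{1..Suc i}. dd m j) = dd m (Suc i) + (\<Sum>j\<in>{1..i}. dd m j)" unfolding s by simp
  moreover have "{j\<in>{1..<Suc i}. odd (m j)} = {j\<in>{1..i}. odd (m j)}" by auto
  moreover define c where "c = card {j\<in>{1..i}. odd (m j)}"
  ultimately have e: "(\<Sum>j\<in>{1..Suc i}. dd m j) = (if odd (m (Suc i)) then (if odd c then 1 else -1) else 0) - int (c mod 2)"
    using Suc.IH unfolding dd_eq d_val c_def by simp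
  show ?case unfolding e card_step c_def[symmetric]
  proof (cases "odd (m (Suc i))")
    case True
    then show "(if odd (m (Suc i)) then (if odd c then 1 else -1) else 0) - int (c mod 2) =
      - int ((c + (if odd (m (Suc i)) then 1 else 0)) mod 2)"
      by (cases "odd c") (auto simp: odd_iff_mod_2_eq_one mod_Suc)
  qed simp
qed

lemma interval_split: "a \<le> b \<Longrightarrow> {1..b} = {1..a} \<union> {a+1..(b::nat)}" by auto

lemma wt_diff: assumes "a < b"
  shows "\<bar>int (wt_root (lam1max m) a b) - int (wt_root (lam2max m) a b)\<bar> \<le> 1"
proof -
  have "int (wt_root (lam1max m) a b) - int (wt_root (lam2max m) a b) = (\<Sum>j\<in>{a+1..b}. dd m j)"
    unfolding wt_root_def dd_def by (simp add: sum_subtractf)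
  also have "\<dots> = (\<Sum>j\<in>{1..b}. dd m j) - (\<Sum>j\<in>{1..a}. dd m j)"
  proof -
    have u: "{1..b} = {1..a} \<union> {a+1..b}" using assms by auto
    have "(\<Sum>j\<in>{1..b}. dd m j) = (\<Sum>j\<in>{1..a}. dd m j) + (\<Sum>j\<in>{a+1..b}. dd m j)"
      unfolding u by (rule sum.union_disjoint) auto
    then show ?thesis by simp
  qed
  finally show ?thesis unfolding G_val by auto
qed

lemma wt_sum: "wt_root (lam1max m) a b + wt_root (lam2max m) a b = wt_root m a b"
  unfolding wt_root_def lam2max_def using lam1_le[of m] by (simp add: sum.distrib[symmetric])

lemma nat_bound: "\<bar>int x - int y\<bar> \<le> 1 \<Longrightarrow> x + y = N \<Longrightarrow> N + 1 \<le> 2 * (min x y + 1)"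
  by (cases "x \<le> y") (auto simp: min_def abs_if split: if_splits)

lemma wt_bound: assumes "a < b"
  shows "wt_root m a b + 1 \<le> 2 * (min (wt_root (lam1max m) a b) (wt_root (lam2max m) a b) + 1)"
  using wt_diff[OF assms, of m] wt_sum[of m a b] by (rule nat_bound)




lemma coeff_tsq: assumes "tsq dvd p" shows "coeff p 0 = 0" "coeff p 1 = 0"
proof -
  obtain k where "p = tsq * k" using assms by (rule dvdE)
  then show "coeff p 0 = 0" "coeff p 1 = 0" by (simp_all add: tsq_def)
qed

lemma tsq_high: "tsq dvd p - [:coeff p 0, coeff p 1:]"
proof -
  define q where "q = p - [:coeff p 0, coeff p 1:]"
  have c0: "coeff q 0 = 0" and c1: "coeff q 1 = 0" by (simp_all add: q_def)
  obtain a q' where q: "q = pCons a q'" by (rule pCons_cases)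
  obtain a' q'' where q': "q' = pCons a' q''" by (rule pCons_cases)
  have "a = 0" using c0 q by simp
  moreover have "a' = 0" using c1 q q' by simp
  ultimately have "q = tsq * q''" using q q' by (simp add: tsq_def)
  then show ?thesis unfolding q_def by (rule dvdI)
qed

lemma deg_low: "degree [:a, b:] \<le> 1"
  by (simp add: degree_pCons_eq_if)

lemma madd_mem: "in_sl n A \<Longrightarrow> in_sl n B \<Longrightarrow> wd [A] \<in> ideal n R \<Longrightarrow> wd [B] \<in> ideal n R \<Longrightarrow> wd [madd A B] \<in> ideal n R"
proof -
  assume h: "in_sl n A" "in_sl n B" "wd [A] \<in> ideal n R" "wd [B] \<in> ideal n R"
  have "cg (ideal n R) (wd ([] @ [madd A B] @ [])) (wd ([] @ [A] @ []) + wd ([] @ [B] @ []))"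
    using words_Nil words_Nil h(1,2) by (rule lin_add)
  then have "cg (ideal n R) (wd [madd A B]) (wd [A] + wd [B])" by simp
  from mem_sum[OF this h(3,4)] show ?thesis .
qed


abbreviation FI where "FI n m \<equiv> ideal n (RelF n (lam1max m) (lam2max m))"

lemma hsum: "(\<lambda>i. lam1max m i + lam2max m i) = m"
  using lam1_le[of m] by (auto simp: fun_eq_iff lam2max_def)

lemma F_up: "in_sl n X \<Longrightarrow> strict_upper X \<Longrightarrow> wd [X] \<in> ideal n (RelF n l1 l2)"
proof -
  assume "in_sl n X" "strict_upper X"
  then have "wd [X] \<in> {wd [X] | X. in_sl n X \<and> strict_upper X}"
    using setb[where f="\<lambda>X. wd [X]" and P="\<lambda>X. in_sl n X \<and> strict_upper X"] by simp
  then have "wd [X] \<in> RelF n l1 l2" unfolding RelF_def by (intro mem_un1)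
  then show ?thesis by (rule rel_mem0)
qed

lemma F_diag: "in_sl n X \<Longrightarrow> diagonal X \<Longrightarrow> (\<forall>i. coeff (X i i) 0 = 0) \<Longrightarrow> wd [X] \<in> ideal n (RelF n l1 l2)"
proof -
  assume "in_sl n X" "diagonal X" "\<forall>i. coeff (X i i) 0 = 0"
  then have "wd [X] \<in> {wd [X] | X. in_sl n X \<and> diagonal X \<and> (\<forall>i. coeff (X i i) 0 = 0)}"
    using setb[where f="\<lambda>X. wd [X]" and P="\<lambda>X. in_sl n X \<and> diagonal X \<and> (\<forall>i. coeff (X i i) 0 = 0)"] by simp
  then have "wd [X] \<in> RelF n l1 l2" unfolding RelF_def by (intro mem_un1 mem_un2)
  then show ?thesis by (rule rel_mem0)
qed

lemma F_low: "in_sl n X \<Longrightarrow> strict_lower X \<Longrightarrow> (\<forall>i j. tsq dvd X i j) \<Longrightarrow> wd [X] \<in> ideal n (RelF n l1 l2)"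
proof -
  assume "in_sl n X" "strict_lower X" "\<forall>i j. tsq dvd X i j"
  then have "wd [X] \<in> {wd [X] | X. in_sl n X \<and> strict_lower X \<and> (\<forall>i j. tsq dvd X i j)}"
    using setb[where f="\<lambda>X. wd [X]" and P="\<lambda>X. in_sl n X \<and> strict_lower X \<and> (\<forall>i j. tsq dvd X i j)"] by simp
  then have "wd [X] \<in> RelF n l1 l2" unfolding RelF_def by (intro mem_un1 mem_un2)
  then show ?thesis by (rule rel_mem0)
qed

lemma W_up: "in_sl n X \<Longrightarrow> strict_upper X \<Longrightarrow> (\<forall>i j. degree (X i j) \<le> 1) \<Longrightarrow> wd [X] \<in> WI n m"
proof -
  assume "in_sl n X" "strict_upper X" "\<forall>i j. degree (X i j) \<le> 1"
  then have "wd [X] \<in> {wd [X] | X. in_sl n X \<and> strict_upper X \<and> (\<forall>i j. degree (X i j) \<le> 1)}"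
    using setb[where f="\<lambda>X. wd [X]" and P="\<lambda>X. in_sl n X \<and> strict_upper X \<and> (\<forall>i j. degree (X i j) \<le> 1)"] by simp
  then have "wd [X] \<in> RelW n m" unfolding RelW_def by (intro mem_un1)
  then show ?thesis by (rule rel_mem0)
qed

lemma W_diag: "in_sl n X \<Longrightarrow> diagonal X \<Longrightarrow> (\<forall>i. coeff (X i i) 0 = 0 \<and> degree (X i i) \<le> 1) \<Longrightarrow> wd [X] \<in> WI n m"
proof -
  assume "in_sl n X" "diagonal X" "\<forall>i. coeff (X i i) 0 = 0 \<and> degree (X i i) \<le> 1"
  then have "wd [X] \<in> {wd [X] | X. in_sl n X \<and> diagonal X \<and> (\<forall>i. coeff (X i i) 0 = 0 \<and> degree (X i i) \<le> 1)}"
    using setb[where f="\<lambda>X. wd [X]" and P="\<lambda>X. in_sl n X \<and> diagonal X \<and> (\<forall>i. coeff (X i i) 0 = 0 \<and> degree (X i i) \<le> 1)"] by simp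
  then have "wd [X] \<in> RelW n m" unfolding RelW_def by (intro mem_un1 mem_un2)
  then show ?thesis by (rule rel_mem0)
qed

lemma W_t2: "in_sl n X \<Longrightarrow> (\<forall>i j. tsq dvd X i j) \<Longrightarrow> wd [X] \<in> WI n m"
  using kill[of n X "[]" "[]" m] by (simp add: tdv_def)


lemma t2_in_F: assumes X: "in_sl n X" and t: "\<forall>i j. tsq dvd X i j"
  shows "wd [X] \<in> ideal n (RelF n l1 l2)"
proof -
  define U where "U = (\<lambda>i j. if i < j then X i j else 0)"
  define D where "D = (\<lambda>i j. if i = j then X i j else 0)"
  define L where "L = (\<lambda>i j. if j < i then X i j else 0)"
  have z: "\<And>i j. n \<le> i \<or> n \<le> j \<Longrightarrow> X i j = 0" using X unfolding in_sl_def by blast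
  have tr: "(\<Sum>i<n. X i i) = 0" using X unfolding in_sl_def by blast
  have e: "X = madd U (madd D L)"
  proof (intro ext)
    fix i j show "X i j = madd U (madd D L) i j"
      unfolding madd_def U_def D_def L_def by (cases i j rule: linorder_cases) auto
  qed
  have sU: "in_sl n U" unfolding in_sl_def U_def using z by auto
  have sD: "in_sl n D" unfolding in_sl_def D_def using z tr by auto
  have sL: "in_sl n L" unfolding in_sl_def L_def using z by auto
  have sDL: "in_sl n (madd D L)" using sD sL unfolding in_sl_def madd_def by (auto simp: sum.distrib)
  have mU: "wd [U] \<in> ideal n (RelF n l1 l2)"
    using sU by (rule F_up) (auto simp: strict_upper_def U_def)
  have mD: "wd [D] \<in> ideal n (RelF n l1 l2)"
    using sD by (rule F_diag) (auto simp: diagonal_def D_def coeff_tsq t)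
  have mL: "wd [L] \<in> ideal n (RelF n l1 l2)"
    using sL by (rule F_low) (auto simp: strict_lower_def L_def t)
  have "wd [madd U (madd D L)] \<in> ideal n (RelF n l1 l2)"
    using sU sDL mU madd_mem[OF sD sL mD mL] by (rule madd_mem)
  then show ?thesis unfolding e[symmetric] .
qed

definition lowp :: "complex poly \<Rightarrow> complex poly" where "lowp p = [:coeff p 0, coeff p 1:]"

lemma lowp0[simp]: "lowp 0 = 0" by (simp add: lowp_def)
lemma tsq_lowp: "tsq dvd p - lowp p" unfolding lowp_def by (rule tsq_high)

lemma upF_in_W: assumes X: "in_sl n X" and u: "strict_upper X"
  shows "wd [X] \<in> WI n m"
proof -
  define X1 where "X1 = (\<lambda>i j. lowp (X i j))"
  define X2 where "X2 = (\<lambda>i j. X i j - lowp (X i j))"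
  have z: "\<And>i j. n \<le> i \<or> n \<le> j \<Longrightarrow> X i j = 0" using X unfolding in_sl_def by blast
  have d: "\<And>i. X i i = 0" using u unfolding strict_upper_def by blast
  have e: "X = madd X1 X2" unfolding madd_def X1_def X2_def by simp
  have s1: "in_sl n X1" unfolding in_sl_def X1_def using z d by auto
  have s2: "in_sl n X2" unfolding in_sl_def X2_def using z d by auto
  have m1: "wd [X1] \<in> WI n m"
    using s1 by (rule W_up) (use u in \<open>auto simp: strict_upper_def X1_def lowp_def deg_low\<close>)
  have m2: "wd [X2] \<in> WI n m"
    using s2 by (rule W_t2) (simp add: X2_def tsq_lowp)
  show ?thesis unfolding e using s1 s2 m1 m2 by (rule madd_mem)
qed

lemma diagF_in_W: assumes X: "in_sl n X" and dg: "diagonal X" and c0: "\<forall>i. coeff (X i i) 0 = 0"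
  shows "wd [X] \<in> WI n m"
proof -
  define X1 where "X1 = (\<lambda>i j. if i = j then lowp (X i j) else 0)"
  define X2 where "X2 = (\<lambda>i j. X i j - X1 i j)"
  have z: "\<And>i j. n \<le> i \<or> n \<le> j \<Longrightarrow> X i j = 0" using X unfolding in_sl_def by blast
  have tr: "(\<Sum>i<n. X i i) = 0" using X unfolding in_sl_def by blast
  have od: "\<And>i j. i \<noteq> j \<Longrightarrow> X i j = 0" using dg unfolding diagonal_def by blast
  have e: "X = madd X1 X2" unfolding madd_def X1_def X2_def by simp
  have tr1: "(\<Sum>i<n. X1 i i) = 0"
  proof -
    have "(\<Sum>i<n. X1 i i) = (\<Sum>i<n. monom (coeff (X i i) 1) 1)"
      by (rule sum.cong) (auto simp: X1_def lowp_def c0 monom_altdef)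
    also have "\<dots> = monom (\<Sum>i<n. coeff (X i i) 1) 1" by (simp add: monom_sum)
    also have "\<dots> = monom (coeff (\<Sum>i<n. X i i) 1) 1" by (simp add: coeff_sum)
    also have "\<dots> = 0" using tr by simp
    finally show ?thesis .
  qed
  have s1: "in_sl n X1" unfolding in_sl_def using tr1 z by (auto simp: X1_def)
  have s2: "in_sl n X2" unfolding in_sl_def X2_def using tr tr1 z by (auto simp: X1_def sum_subtractf)
  have m1: "wd [X1] \<in> WI n m"
    using s1 by (rule W_diag) (auto simp: diagonal_def X1_def lowp_def deg_low c0)
  have m2: "wd [X2] \<in> WI n m"
    using s2 by (rule W_t2) (auto simp: X2_def X1_def tsq_lowp od)
  show ?thesis unfolding e using s1 s2 m1 m2 by (rule madd_mem)
qed



lemma W_sub_F: "RelW n m \<subseteq> FI n m"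
proof
  fix r assume "r \<in> RelW n m"
  then show "r \<in> FI n m" unfolding RelW_def
  proof (elim UnE)
    assume "r \<in> {wd [X] | X. in_sl n X \<and> strict_upper X \<and> (\<forall>i j. degree (X i j) \<le> 1)}"
    then obtain X where "r = wd [X]" "in_sl n X" "strict_upper X" by blast
    then show ?thesis using F_up by blast
  next
    assume "r \<in> {wd [X] | X. in_sl n X \<and> diagonal X \<and> (\<forall>i. coeff (X i i) 0 = 0 \<and> degree (X i i) \<le> 1)}"
    then obtain X where "r = wd [X]" "in_sl n X" "diagonal X" "\<forall>i. coeff (X i i) 0 = 0" by blast
    then show ?thesis using F_diag by blast
  next
    assume "r \<in> h_rel n m"
    then have "r \<in> h_rel n (\<lambda>i. lam1max m i + lam2max m i)" unfolding hsum .
    then have "r \<in> RelF n (lam1max m) (lam2max m)" unfolding RelF_def by (intro mem_un1 mem_un2)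
    then show ?thesis by (rule rel_mem0)
  next
    assume "r \<in> {wd (replicate (wt_root m a b + 1) (elem b a 1)) | a b. a < b \<and> b < n}"
    then have "r \<in> {wd (replicate (wt_root (\<lambda>i. lam1max m i + lam2max m i) a b + 1) (elem b a 1)) | a b. a < b \<and> b < n}"
      unfolding hsum .
    then have "r \<in> RelF n (lam1max m) (lam2max m)" unfolding RelF_def by (intro mem_un1 mem_un2)
    then show ?thesis by (rule rel_mem0)
  next
    assume "r \<in> {wd [X] | X. in_sl n X \<and> (\<forall>i j. tsq dvd X i j)}"
    then obtain X where "r = wd [X]" "in_sl n X" "\<forall>i j. tsq dvd X i j" by blast
    then show ?thesis using t2_in_F by blast
  qed
qed

lemma F_sub_W: "RelF n (lam1max m) (lam2max m) \<subseteq> WI n m"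
proof
  fix r assume "r \<in> RelF n (lam1max m) (lam2max m)"
  then show "r \<in> WI n m" unfolding RelF_def
  proof (elim UnE)
    assume "r \<in> {wd [X] | X. in_sl n X \<and> strict_upper X}"
    then obtain X where "r = wd [X]" "in_sl n X" "strict_upper X" by blast
    then show ?thesis using upF_in_W by blast
  next
    assume "r \<in> {wd [X] | X. in_sl n X \<and> diagonal X \<and> (\<forall>i. coeff (X i i) 0 = 0)}"
    then obtain X where "r = wd [X]" "in_sl n X" "diagonal X" "\<forall>i. coeff (X i i) 0 = 0" by blast
    then show ?thesis using diagF_in_W by blast
  next
    assume "r \<in> {wd [X] | X. in_sl n X \<and> strict_lower X \<and> (\<forall>i j. tsq dvd X i j)}"
    then obtain X where "r = wd [X]" "in_sl n X" "\<forall>i j. tsq dvd X i j" by blast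
    then show ?thesis using W_t2 by blast
  next
    assume "r \<in> h_rel n (\<lambda>i. lam1max m i + lam2max m i)"
    then have "r \<in> h_rel n m" unfolding hsum .
    then have "r \<in> RelW n m" unfolding RelW_def by (intro mem_un1 mem_un2)
    then show ?thesis by (rule rel_mem0)
  next
    assume "r \<in> {wd (replicate (wt_root (\<lambda>i. lam1max m i + lam2max m i) a b + 1) (elem b a 1)) | a b. a < b \<and> b < n}"
    then have "r \<in> {wd (replicate (wt_root m a b + 1) (elem b a 1)) | a b. a < b \<and> b < n}"
      unfolding hsum .
    then have "r \<in> RelW n m" unfolding RelW_def by (intro mem_un1 mem_un2)
    then show ?thesis by (rule rel_mem0)
  next
    assume "r \<in> {wd (replicate (min (wt_root (lam1max m) a b) (wt_root (lam2max m) a b) + 1) (elem b a [:0, 1:])) | a b.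
        a < b \<and> b < n}"
    then obtain a b where r: "r = wd (replicate (min (wt_root (lam1max m) a b) (wt_root (lam2max m) a b) + 1) (elem b a [:0, 1:]))"
      and ab: "a < b" "b < n" by blast
    have "wd (replicate (min (wt_root (lam1max m) a b) (wt_root (lam2max m) a b) + 1) (Yt a b)) \<in> WI n m"
      using ab wt_bound[OF ab(1), of m] by (intro mainY) auto
    then show ?thesis unfolding r Yt_def tt_def .
  qed
qed

lemma ideals_eq: "WI n m = FI n m"
  using ideal_mono[OF W_sub_F] ideal_mono[OF F_sub_W] by blast

theorem lemma9p5:
  fixes n :: nat and m :: "nat \<Rightarrow> nat"
  assumes "2 \<le> n"
  shows "mod_iso n (ideal n (RelW n m)) (ideal n (RelF n (lam1max m) (lam2max m)))"
proof -
  have z: "(\<lambda>w. 0) \<in> FI n m" unfolding ideal_def by (rule cspan.zero)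
  show ?thesis unfolding mod_iso_def
  proof (rule exI[of _ "\<lambda>a. a"], intro conjI ballI allI impI)
    fix b assume "b \<in> Tn n"
    have "(\<lambda>w. b w - b w) \<in> FI n m" using z by simp
    then show "\<exists>a\<in>Tn n. (\<lambda>w. a w - b w) \<in> FI n m" using \<open>b \<in> Tn n\<close> by (rule bexI)
  next
    fix X a assume "a \<in> Tn n" "in_sl n X"
    show "(\<lambda>w. lmul [X] a w - lmul [X] a w) \<in> FI n m" using z by simp
  qed (simp_all add: ideals_eq)
qed


end
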